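(* Let $Q\colon\mathbb{R}^p\to\mathbb{R}$ be a polynomial and let $P_1$ be a program on the dictionary $\mathcal{D}_1=\{+,\times,\mathrm{ReLU},+c,\times c\}$ such that $[P_1](x)=Q(x)$ for all $x$ in a nonempty open set $S\subset\mathbb{R}^p$. Then there is a program $P_2$ on the dictionary $\mathcal{D}=\{+,\times,+c,\times c\}$ such that $[P_2]=Q$ on all of $\mathbb{R}^p$. Furthermore, if $\mathrm{cost}(\mathrm{ReLU})=\mathrm{cost}(\times c)$, then $\mathrm{cost}(P_2)=\mathrm{cost}(P_1)$.
   Context: A program on a dictionary with $p$ inputs computes $x_i=g_i((x_j)_{j\in\mathrm{pr}(i)})$, $i=p+1,\dots,m$, with $g_i$ in the dictionary applied to earlier values ($j<i$), returning $x_m$; $[P]$ denotes the computed function and $\mathrm{cost}(P)=\sum_i\mathrm{cost}(g_i)$. $+c$ and $\times c$ denote addition and multiplication by a fixed real constant; $\mathrm{ReLU}(t)=\max(0,t)$. *)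

theory Defs
  imports Main "HOL.Real"
begin

text \<open>Points of R^p are represented as real lists of length p.
  Program values x_1..x_m are stored 0-based: positions 0..p-1 are the inputs,
  position p+k is the value of the k-th instruction.\<close>

datatype op_kind = OpAdd | OpMul | OpRelu | OpAddC | OpMulC

datatype instr =
    Add nat nat
  | Mul nat nat
  | Relu nat
  | AddC real nat
  | MulC real nat

fun kind :: "instr \<Rightarrow> op_kind" where
  "kind (Add _ _) = OpAdd"
| "kind (Mul _ _) = OpMul"
| "kind (Relu _) = OpRelu"
| "kind (AddC _ _) = OpAddC"
| "kind (MulC _ _) = OpMulC"

fun args :: "instr \<Rightarrow> nat list" where
  "args (Add j k) = [j, k]"
| "args (Mul j k) = [j, k]"
| "args (Relu j) = [j]"
| "args (AddC _ j) = [j]"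
| "args (MulC _ j) = [j]"

definition relu :: "real \<Rightarrow> real" where
  "relu t = max 0 t"

fun apply_instr :: "instr \<Rightarrow> real list \<Rightarrow> real" where
  "apply_instr (Add j k) v = v ! j + v ! k"
| "apply_instr (Mul j k) v = v ! j * v ! k"
| "apply_instr (Relu j) v = relu (v ! j)"
| "apply_instr (AddC c j) v = v ! j + c"
| "apply_instr (MulC c j) v = v ! j * c"

fun exec :: "instr list \<Rightarrow> real list \<Rightarrow> real list" where
  "exec [] v = v"
| "exec (i # is) v = exec is (v @ [apply_instr i v])"

text \<open>A program with p inputs: every argument of instruction k refers to an
  earlier value (index < p + k), and there is a value x_m to return.\<close>
definition wf_prog :: "nat \<Rightarrow> instr list \<Rightarrow> bool" where
  "wf_prog p P \<longleftrightarrow> 1 \<le> p + length P \<and>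
     (\<forall>k < length P. \<forall>j \<in> set (args (P ! k)). j < p + k)"

definition run :: "instr list \<Rightarrow> real list \<Rightarrow> real" where
  "run P xs = last (exec P xs)"

definition relu_free :: "instr list \<Rightarrow> bool" where
  "relu_free P \<longleftrightarrow> (\<forall>i \<in> set P. kind i \<noteq> OpRelu)"

definition prog_cost :: "(op_kind \<Rightarrow> real) \<Rightarrow> instr list \<Rightarrow> real" where
  "prog_cost c P = sum_list (map (\<lambda>i. c (kind i)) P)"

inductive poly_fun :: "nat \<Rightarrow> (real list \<Rightarrow> real) \<Rightarrow> bool" for p where
  pconst: "poly_fun p (\<lambda>x. a)"
| pcoord: "i < p \<Longrightarrow> poly_fun p (\<lambda>x. x ! i)"
| padd: "poly_fun p f \<Longrightarrow> poly_fun p g \<Longrightarrow> poly_fun p (\<lambda>x. f x + g x)"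
| pmul: "poly_fun p f \<Longrightarrow> poly_fun p g \<Longrightarrow> poly_fun p (\<lambda>x. f x * g x)"

text \<open>Open subsets of R^p (points = lists of length p), standard topology
  (equivalently given by the sup-metric).\<close>
definition open_Rp :: "nat \<Rightarrow> real list set \<Rightarrow> bool" where
  "open_Rp p S \<longleftrightarrow> (\<forall>x \<in> S. length x = p) \<and>
     (\<forall>x \<in> S. \<exists>e > 0. \<forall>y. length y = p \<and> (\<forall>i < p. \<bar>y ! i - x ! i\<bar> < e) \<longrightarrow> y \<in> S)"

end

theory Submission
  imports Defs "HOL-Computational_Algebra.Polynomial"
begin

lemma poly_fun_cont:
  assumes "poly_fun p f" "length x = p"
  shows "\<exists>C\<ge>0. \<forall>y. length y = p \<and> (\<forall>i<p. \<bar>y!i - x!i\<bar> \<le> 1) \<longrightarrow>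
           \<bar>f y - f x\<bar> \<le> C * (\<Sum>i<p. \<bar>y!i - x!i\<bar>)"
  using assms(1)
proof induction
  case (pconst a) then show ?case by (intro exI[of _ 0]) simp
next
  case (pcoord i)
  show ?case
  proof (intro exI[of _ 1] conjI allI impI)
    fix y assume "length y = p \<and> (\<forall>i<p. \<bar>y!i - x!i\<bar> \<le> 1)"
    have "\<bar>y!i - x!i\<bar> \<le> (\<Sum>i<p. \<bar>y!i - x!i\<bar>)"
      using pcoord by (intro member_le_sum) auto
    then show "\<bar>y!i - x!i\<bar> \<le> 1 * (\<Sum>i<p. \<bar>y!i - x!i\<bar>)" by simp
  qed simp
next
  case (padd f g)
  then obtain C1 C2 where c1: "C1 \<ge> 0" "\<forall>y. length y = p \<and> (\<forall>i<p. \<bar>y!i - x!i\<bar> \<le> 1) \<longrightarrow>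
           \<bar>f y - f x\<bar> \<le> C1 * (\<Sum>i<p. \<bar>y!i - x!i\<bar>)"
    and c2: "C2 \<ge> 0" "\<forall>y. length y = p \<and> (\<forall>i<p. \<bar>y!i - x!i\<bar> \<le> 1) \<longrightarrow>
           \<bar>g y - g x\<bar> \<le> C2 * (\<Sum>i<p. \<bar>y!i - x!i\<bar>)" by blast
  show ?case
  proof (intro exI[of _ "C1 + C2"] conjI allI impI)
    fix y assume h: "length y = p \<and> (\<forall>i<p. \<bar>y!i - x!i\<bar> \<le> 1)"
    have "\<bar>f y + g y - (f x + g x)\<bar> \<le> \<bar>f y - f x\<bar> + \<bar>g y - g x\<bar>" by simp
    also have "\<dots> \<le> C1 * (\<Sum>i<p. \<bar>y!i - x!i\<bar>) + C2 * (\<Sum>i<p. \<bar>y!i - x!i\<bar>)"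
      using c1(2)[rule_format, of y] c2(2)[rule_format, of y] h by (intro add_mono) auto
    finally show "\<bar>f y + g y - (f x + g x)\<bar> \<le> (C1 + C2) * (\<Sum>i<p. \<bar>y!i - x!i\<bar>)"
      by (simp add: algebra_simps)
  qed (use c1 c2 in simp)
next
  case (pmul f g)
  then obtain C1 C2 where c1: "C1 \<ge> 0" "\<forall>y. length y = p \<and> (\<forall>i<p. \<bar>y!i - x!i\<bar> \<le> 1) \<longrightarrow>
           \<bar>f y - f x\<bar> \<le> C1 * (\<Sum>i<p. \<bar>y!i - x!i\<bar>)"
    and c2: "C2 \<ge> 0" "\<forall>y. length y = p \<and> (\<forall>i<p. \<bar>y!i - x!i\<bar> \<le> 1) \<longrightarrow>
           \<bar>g y - g x\<bar> \<le> C2 * (\<Sum>i<p. \<bar>y!i - x!i\<bar>)" by blast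
  define C where "C = (\<bar>f x\<bar> + C1 * real p) * C2 + \<bar>g x\<bar> * C1"
  show ?case
  proof (intro exI[of _ C] conjI allI impI)
    show "C \<ge> 0" unfolding C_def using c1 c2 by simp
    fix y assume h: "length y = p \<and> (\<forall>i<p. \<bar>y!i - x!i\<bar> \<le> 1)"
    define s where "s = (\<Sum>i<p. \<bar>y!i - x!i\<bar>)"
    have s0: "s \<ge> 0" unfolding s_def by (simp add: sum_nonneg)
    have sp: "s \<le> real p" unfolding s_def using h sum_bounded_above[of "{..<p}" "\<lambda>i. \<bar>y!i - x!i\<bar>" 1] by simp
    have hf: "\<bar>f y - f x\<bar> \<le> C1 * s" and hg: "\<bar>g y - g x\<bar> \<le> C2 * s"
      using c1 c2 h unfolding s_def by auto
    have fy: "\<bar>f y\<bar> \<le> \<bar>f x\<bar> + C1 * real p"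
    proof -
      have "\<bar>f y\<bar> \<le> \<bar>f x\<bar> + \<bar>f y - f x\<bar>" by simp
      moreover have "C1 * s \<le> C1 * real p" using sp c1 by (simp add: mult_left_mono)
      ultimately show ?thesis using hf by linarith
    qed
    have "f y * g y - f x * g x = f y * (g y - g x) + g x * (f y - f x)" by (simp add: algebra_simps)
    then have "\<bar>f y * g y - f x * g x\<bar> \<le> \<bar>f y\<bar> * \<bar>g y - g x\<bar> + \<bar>g x\<bar> * \<bar>f y - f x\<bar>"
      by (metis abs_mult abs_triangle_ineq)
    also have "\<dots> \<le> (\<bar>f x\<bar> + C1 * real p) * (C2 * s) + \<bar>g x\<bar> * (C1 * s)"
      by (intro add_mono mult_mono fy hg hf mult_left_mono) (use c1 c2 s0 in auto)
    also have "\<dots> = C * s" unfolding C_def by (simp add: algebra_simps)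
    finally show "\<bar>f y * g y - f x * g x\<bar> \<le> C * (\<Sum>i<p. \<bar>y!i - x!i\<bar>)" unfolding s_def .
  qed
qed

lemma poly_fun_pos:
  assumes "poly_fun p f" "length x = p" "f x > 0"
  shows "\<exists>e>0. \<forall>y. length y = p \<and> (\<forall>i<p. \<bar>y!i - x!i\<bar> < e) \<longrightarrow> f y > 0"
proof -
  obtain C where C: "C \<ge> 0" "\<forall>y. length y = p \<and> (\<forall>i<p. \<bar>y!i - x!i\<bar> \<le> 1) \<longrightarrow>
           \<bar>f y - f x\<bar> \<le> C * (\<Sum>i<p. \<bar>y!i - x!i\<bar>)"
    using poly_fun_cont[OF assms(1,2)] by blast
  define e where "e = min 1 (f x / (2 * (C + 1) * (real p + 1)))"
  have e0: "e > 0" unfolding e_def using assms C by simp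
  show ?thesis
  proof (intro exI[of _ e] conjI allI impI e0)
    fix y assume h: "length y = p \<and> (\<forall>i<p. \<bar>y!i - x!i\<bar> < e)"
    define s where "s = (\<Sum>i<p. \<bar>y!i - x!i\<bar>)"
    have s0: "s \<ge> 0" unfolding s_def by (simp add: sum_nonneg)
    have "\<forall>i<p. \<bar>y!i - x!i\<bar> \<le> 1" using h unfolding e_def by force
    then have d: "\<bar>f y - f x\<bar> \<le> C * s" using C h unfolding s_def by auto
    have sp: "s \<le> real p * e" unfolding s_def using h sum_bounded_above[of "{..<p}" "\<lambda>i. \<bar>y!i - x!i\<bar>" e]
      by (simp add: less_imp_le)
    have ee: "e \<le> f x / (2 * (C + 1) * (real p + 1))" unfolding e_def by (rule min.cobounded2)
    have 1: "C * s \<le> (C+1) * ((real p + 1) * e)"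
      by (intro mult_mono) (use C sp e0 s0 in \<open>auto intro: order_trans[OF sp] mult_right_mono\<close>)
    have "(real p + 1) * e \<le> (real p + 1) * (f x / (2 * (C + 1) * (real p + 1)))"
      using ee by (intro mult_left_mono) auto
    then have 2: "(C+1) * ((real p + 1) * e) \<le> (C+1) * ((real p + 1) * (f x / (2 * (C + 1) * (real p + 1))))"
      by (rule mult_left_mono) (use C in auto)
    have 3: "(C+1) * ((real p + 1) * (f x / (2 * (C + 1) * (real p + 1)))) = f x / 2"
    proof -
      have K: "(C + 1) * (real p + 1) > 0" using C by (intro mult_pos_pos) auto
      have aux: "\<And>k a. (k::real) > 0 \<Longrightarrow> k*(a/(2*k)) = a/2" by (simp add: field_simps)
      have e1: "2*(C+1)*(real p+1) = 2*((C+1)*(real p+1))" by (simp only: mult.assoc)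
      have e2: "\<And>X. (C+1)*((real p+1)*X) = ((C+1)*(real p+1))*X" by (simp only: mult.assoc)
      show ?thesis unfolding e1 e2 by (rule aux[OF K])
    qed
    from 1 2 3 have "C * s \<le> f x / 2" by linarith
    then show "f y > 0" using d assms(3) by linarith
  qed
qed

lemma poly_fun_line:
  assumes "poly_fun p f"
  shows "\<exists>q. \<forall>t. f (map (\<lambda>i. x!i + t*(y!i - x!i)) [0..<p]) = poly q t"
  using assms
proof induction
  case (pconst a) show ?case by (intro exI[of _ "[:a:]"]) simp
next
  case (pcoord i) show ?case using pcoord by (intro exI[of _ "[:x!i, y!i - x!i:]"]) (simp add: algebra_simps)
next
  case (padd f g) then obtain q1 q2 where "\<forall>t. f (map (\<lambda>i. x!i + t*(y!i - x!i)) [0..<p]) = poly q1 t"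
    "\<forall>t. g (map (\<lambda>i. x!i + t*(y!i - x!i)) [0..<p]) = poly q2 t" by blast
  then show ?case by (intro exI[of _ "q1 + q2"]) simp
next
  case (pmul f g) then obtain q1 q2 where "\<forall>t. f (map (\<lambda>i. x!i + t*(y!i - x!i)) [0..<p]) = poly q1 t"
    "\<forall>t. g (map (\<lambda>i. x!i + t*(y!i - x!i)) [0..<p]) = poly q2 t" by blast
  then show ?case by (intro exI[of _ "q1 * q2"]) simp
qed

lemma poly_fun_zero:
  assumes "poly_fun p f" "open_Rp p U" "U \<noteq> {}" "\<forall>x\<in>U. f x = 0" "length y = p"
  shows "f y = 0"
proof -
  obtain x where xU: "x \<in> U" using assms(3) by blast
  then have lx: "length x = p" using assms(2) unfolding open_Rp_def by blast
  obtain e where e: "e > 0" "\<forall>z. length z = p \<and> (\<forall>i<p. \<bar>z!i - x!i\<bar> < e) \<longrightarrow> z \<in> U"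
    using assms(2) xU unfolding open_Rp_def by blast
  obtain q where q: "\<forall>t. f (map (\<lambda>i. x!i + t*(y!i - x!i)) [0..<p]) = poly q t"
    using poly_fun_line[OF assms(1)] by blast
  define M where "M = (\<Sum>i<p. \<bar>y!i - x!i\<bar>)"
  have M0: "M \<ge> 0" unfolding M_def by (simp add: sum_nonneg)
  define d where "d = e / (1 + M)"
  have d0: "d > 0" unfolding d_def using e M0 by simp
  have "{0<..<d} \<subseteq> {t. poly q t = 0}"
  proof
    fix t assume t: "t \<in> {0<..<d}"
    have "map (\<lambda>i. x!i + t*(y!i - x!i)) [0..<p] \<in> U"
    proof (rule e(2)[rule_format], intro conjI allI impI)
      fix i assume i: "i < p"
      have "\<bar>y!i - x!i\<bar> \<le> M" unfolding M_def using i by (intro member_le_sum) auto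
      then have "t * \<bar>y!i - x!i\<bar> \<le> t * M" using t by (intro mult_left_mono) auto
      also have "t * M \<le> t * (1 + M)" using t by simp
      also have "t * (1 + M) < d * (1 + M)" using t M0 by (intro mult_strict_right_mono) auto
      also have "d * (1 + M) = e" unfolding d_def using M0 by simp
      finally show "\<bar>map (\<lambda>i. x!i + t*(y!i - x!i)) [0..<p] ! i - x!i\<bar> < e"
        using i t by (simp add: abs_mult)
    qed simp
    then show "t \<in> {t. poly q t = 0}" using q assms(4) by auto
  qed
  then have "infinite {t. poly q t = 0}" using d0 infinite_Ioo[of 0 d] finite_subset by blast
  then have "q = 0" using poly_roots_finite by blast
  then have "f (map ((!) y) [0..<p]) = 0" using q[rule_format, of 1] by simp
  moreover have "map ((!) y) [0..<p] = y"
    using assms(5) map_nth[of y] by simp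
  ultimately show ?thesis by simp
qed

lemma exec_append: "exec (P @ Q) v = exec Q (exec P v)"
  by (induction P arbitrary: v) auto

lemma length_exec: "length (exec P v) = length v + length P"
  by (induction P arbitrary: v) auto

lemma exec_snoc: "exec (P @ [i]) v = exec P v @ [apply_instr i (exec P v)]"
  by (simp add: exec_append)

definition rel :: "instr \<Rightarrow> instr \<Rightarrow> bool" where
  "rel i i' \<longleftrightarrow> (i' = i \<and> kind i \<noteq> OpRelu) \<or> (\<exists>j c. i = Relu j \<and> i' = MulC c j)"

lemma rel_props: "rel i i' \<Longrightarrow> args i' = args i \<and> kind i' \<noteq> OpRelu \<and>
   kind i' = (if kind i = OpRelu then OpMulC else kind i)"
  unfolding rel_def by auto

lemma apply_poly:
  assumes "kind i \<noteq> OpRelu"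
    and "\<forall>j\<in>set (args i). poly_fun p (G j) \<and> (\<forall>x. length x = p \<longrightarrow> v x ! j = G j x)"
  shows "\<exists>g. poly_fun p g \<and> (\<forall>x. length x = p \<longrightarrow> apply_instr i (v x) = g x)"
  using assms
proof (cases i)
  case (Add j k) then show ?thesis using assms
    by (intro exI[of _ "\<lambda>x. G j x + G k x"]) (auto intro: poly_fun.padd)
next
  case (Mul j k) then show ?thesis using assms
    by (intro exI[of _ "\<lambda>x. G j x * G k x"]) (auto intro: poly_fun.pmul)
next
  case (AddC c j) then show ?thesis using assms
    by (intro exI[of _ "\<lambda>x. G j x + c"]) (auto intro: poly_fun.padd poly_fun.pconst)
next
  case (MulC c j) then show ?thesis using assms
    by (intro exI[of _ "\<lambda>x. G j x * c"]) (auto intro: poly_fun.pmul poly_fun.pconst)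
qed auto

lemma main:
  assumes "S \<noteq> {}" "open_Rp p S"
  shows "(\<forall>k<length P. \<forall>j\<in>set (args (P!k)). j < p+k) \<Longrightarrow>
    \<exists>U P'. U \<subseteq> S \<and> U \<noteq> {} \<and> open_Rp p U \<and> list_all2 rel P P' \<and>
      (\<forall>x\<in>U. exec P' x = exec P x) \<and>
      (\<forall>k < p + length P. \<exists>g. poly_fun p g \<and> (\<forall>x. length x = p \<longrightarrow> exec P' x ! k = g x))"
proof (induction P rule: rev_induct)
  case Nil
  show ?case
    by (rule exI[of _ S], rule exI[of _ "[]"]) (use assms in \<open>auto intro: poly_fun.pcoord\<close>)
next
  case (snoc i P)
  have wfP: "\<forall>k<length P. \<forall>j\<in>set (args (P!k)). j < p+k"
  proof (intro allI impI ballI)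
    fix k j assume "k < length P" "j \<in> set (args (P!k))"
    then show "j < p + k" using snoc.prems[rule_format, of k j] by (simp add: nth_append)
  qed
  have wfi: "\<forall>j\<in>set (args i). j < p + length P"
    using snoc.prems[rule_format, of "length P"] by simp
  obtain U P' where U: "U \<subseteq> S" "U \<noteq> {}" "open_Rp p U" and rP: "list_all2 rel P P'"
    and ex: "\<forall>x\<in>U. exec P' x = exec P x"
    and gs: "\<forall>k < p + length P. \<exists>g. poly_fun p g \<and> (\<forall>x. length x = p \<longrightarrow> exec P' x ! k = g x)"
    using snoc.IH[OF wfP] by blast
  obtain G where G: "\<And>k. k < p + length P \<Longrightarrow> poly_fun p (G k) \<and> (\<forall>x. length x = p \<longrightarrow> exec P' x ! k = G k x)"
    using gs by metis
  have lP': "length P' = length P" using rP by (simp add: list_all2_lengthD)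
  have low: "\<And>i' x k. length x = p \<Longrightarrow> k < p + length P \<Longrightarrow> exec (P' @ [i']) x ! k = exec P' x ! k"
    by (simp add: exec_snoc nth_append length_exec lP')
  have top: "\<And>i' x. length x = p \<Longrightarrow> exec (P' @ [i']) x ! (p + length P) = apply_instr i' (exec P' x)"
    by (simp add: exec_snoc nth_append length_exec lP')
  have polys: "\<forall>k < p + length (P @ [i]). \<exists>g. poly_fun p g \<and> (\<forall>x. length x = p \<longrightarrow> exec (P' @ [i']) x ! k = g x)"
    if ki: "kind i' \<noteq> OpRelu" and ai: "args i' = args i" for i'
  proof (intro allI impI)
    fix k assume k: "k < p + length (P @ [i])"
    show "\<exists>g. poly_fun p g \<and> (\<forall>x. length x = p \<longrightarrow> exec (P' @ [i']) x ! k = g x)"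
    proof (cases "k < p + length P")
      case True then show ?thesis using G[OF True] low by metis
    next
      case False
      then have kk: "k = p + length P" using k by simp
      have "\<exists>g. poly_fun p g \<and> (\<forall>x. length x = p \<longrightarrow> apply_instr i' (exec P' x) = g x)"
        by (rule apply_poly[OF ki]) (use G wfi ai in auto)
      then show ?thesis using top kk by metis
    qed
  qed
  show ?case
  proof (cases "\<exists>j. i = Relu j")
    case False
    then have ki: "kind i \<noteq> OpRelu" by (cases i) auto
    show ?thesis
    proof (intro exI[of _ U] exI[of _ "P' @ [i]"] conjI U)
      show "list_all2 rel (P @ [i]) (P' @ [i])" using rP ki by (auto intro: list_all2_appendI simp: rel_def)
      show "\<forall>x\<in>U. exec (P' @ [i]) x = exec (P @ [i]) x" using ex by (simp add: exec_snoc)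
      show "\<forall>k < p + length (P @ [i]). \<exists>g. poly_fun p g \<and> (\<forall>x. length x = p \<longrightarrow> exec (P' @ [i]) x ! k = g x)"
        by (rule polys) (use ki in auto)
    qed
  next
    case True
    then obtain j where ij: "i = Relu j" by blast
    have jl: "j < p + length P" using wfi ij by simp
    note Gj = G[OF jl]
    have lenU: "\<And>x. x \<in> U \<Longrightarrow> length x = p" using U(3) unfolding open_Rp_def by blast
    show ?thesis
    proof (cases "\<exists>x0\<in>U. G j x0 > 0")
      case True
      define U' where "U' = {y\<in>U. G j y > 0}"
      show ?thesis
      proof (intro exI[of _ U'] exI[of _ "P' @ [MulC 1 j]"] conjI)
        show "U' \<subseteq> S" using U unfolding U'_def by auto
        show "U' \<noteq> {}" using True unfolding U'_def by auto
        show "open_Rp p U'" unfolding open_Rp_def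
        proof (intro conjI ballI)
          fix x assume x: "x \<in> U'"
          then show "length x = p" using lenU unfolding U'_def by auto
          obtain e1 where e1: "e1 > 0" "\<forall>y. length y = p \<and> (\<forall>i<p. \<bar>y ! i - x ! i\<bar> < e1) \<longrightarrow> y \<in> U"
            using U(3) x unfolding open_Rp_def U'_def by blast
          obtain e2 where e2: "e2 > 0" "\<forall>y. length y = p \<and> (\<forall>i<p. \<bar>y ! i - x ! i\<bar> < e2) \<longrightarrow> G j y > 0"
            using poly_fun_pos[of p "G j" x] Gj x lenU unfolding U'_def by blast
          show "\<exists>e>0. \<forall>y. length y = p \<and> (\<forall>i<p. \<bar>y ! i - x ! i\<bar> < e) \<longrightarrow> y \<in> U'"
            by (rule exI[of _ "min e1 e2"]) (use e1 e2 in \<open>auto simp: U'_def\<close>)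
        qed
        show "list_all2 rel (P @ [i]) (P' @ [MulC 1 j])" using rP ij by (auto intro: list_all2_appendI simp: rel_def)
        show "\<forall>x\<in>U'. exec (P' @ [MulC 1 j]) x = exec (P @ [i]) x"
        proof
          fix x assume x: "x \<in> U'"
          then have xU: "x \<in> U" "G j x > 0" unfolding U'_def by auto
          have "exec P' x = exec P x" using ex xU by blast
          moreover have "exec P' x ! j = G j x" using Gj lenU[OF xU(1)] by blast
          ultimately show "exec (P' @ [MulC 1 j]) x = exec (P @ [i]) x"
            using xU by (simp add: exec_snoc ij relu_def)
        qed
        show "\<forall>k < p + length (P @ [i]). \<exists>g. poly_fun p g \<and> (\<forall>x. length x = p \<longrightarrow> exec (P' @ [MulC 1 j]) x ! k = g x)"
          by (rule polys) (use ij in auto)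
      qed
    next
      case False
      show ?thesis
      proof (intro exI[of _ U] exI[of _ "P' @ [MulC 0 j]"] conjI U)
        show "list_all2 rel (P @ [i]) (P' @ [MulC 0 j])" using rP ij by (auto intro: list_all2_appendI simp: rel_def)
        show "\<forall>x\<in>U. exec (P' @ [MulC 0 j]) x = exec (P @ [i]) x"
        proof
          fix x assume x: "x \<in> U"
          have "exec P' x = exec P x" using ex x by blast
          moreover have "exec P' x ! j = G j x" using Gj lenU[OF x] by blast
          moreover have "G j x \<le> 0" using False x by auto
          ultimately show "exec (P' @ [MulC 0 j]) x = exec (P @ [i]) x"
            by (simp add: exec_snoc ij relu_def)
        qed
        show "\<forall>k < p + length (P @ [i]). \<exists>g. poly_fun p g \<and> (\<forall>x. length x = p \<longrightarrow> exec (P' @ [MulC 0 j]) x ! k = g x)"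
          by (rule polys) (use ij in auto)
      qed
    qed
  qed
qed

theorem lemmaC1:
  fixes p :: nat and Q :: "real list \<Rightarrow> real" and P1 :: "instr list"
    and S :: "real list set" and cost :: "op_kind \<Rightarrow> real"
  assumes "poly_fun p Q"
    and "wf_prog p P1"
    and "S \<noteq> {}" and "open_Rp p S"
    and "\<forall>x \<in> S. run P1 x = Q x"
  shows "\<exists>P2. wf_prog p P2 \<and> relu_free P2 \<and>
           (\<forall>x. length x = p \<longrightarrow> run P2 x = Q x) \<and>
           (cost OpRelu = cost OpMulC \<longrightarrow> prog_cost cost P2 = prog_cost cost P1)"
proof -
  have wf: "\<forall>k<length P1. \<forall>j\<in>set (args (P1!k)). j < p+k" and len1: "1 \<le> p + length P1"
    using assms(2) unfolding wf_prog_def by auto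
  obtain U P' where U: "U \<subseteq> S" "U \<noteq> {}" "open_Rp p U" and rP: "list_all2 rel P1 P'"
    and ex: "\<forall>x\<in>U. exec P' x = exec P1 x"
    and gs: "\<forall>k < p + length P1. \<exists>g. poly_fun p g \<and> (\<forall>x. length x = p \<longrightarrow> exec P' x ! k = g x)"
    using main[OF assms(3,4) wf] by blast
  have lP': "length P' = length P1" using rP by (simp add: list_all2_lengthD)
  have nth: "\<And>k. k < length P1 \<Longrightarrow> rel (P1!k) (P'!k)" using rP by (simp add: list_all2_nthD)
  obtain g where g: "poly_fun p g" "\<forall>x. length x = p \<longrightarrow> exec P' x ! (p + length P1 - 1) = g x"
    using gs len1 by (metis diff_less less_numeral_extra(1) order_less_le_trans)
  have runP': "\<And>x. length x = p \<Longrightarrow> run P' x = g x"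
  proof -
    fix x :: "real list" assume lx: "length x = p"
    have "exec P' x \<noteq> []" using len1 lx by (metis length_exec lP' list.size(3) not_one_le_zero)
    then have "run P' x = exec P' x ! (p + length P1 - 1)"
      unfolding run_def by (simp add: last_conv_nth length_exec lx lP')
    then show "run P' x = g x" using g lx by simp
  qed
  have lenU: "\<And>x. x \<in> U \<Longrightarrow> length x = p" using U(3) unfolding open_Rp_def by blast
  have D: "poly_fun p (\<lambda>x. g x + (\<lambda>x. -1) x * Q x)"
    by (intro poly_fun.padd poly_fun.pmul poly_fun.pconst g assms(1))
  have "\<forall>x\<in>U. g x + (\<lambda>x. -1) x * Q x = 0"
  proof
    fix x assume x: "x \<in> U"
    have "g x = run P' x" using runP' lenU x by simp
    also have "\<dots> = run P1 x" using ex x unfolding run_def by simp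
    also have "\<dots> = Q x" using assms(5) U(1) x by auto
    finally show "g x + (\<lambda>x. -1) x * Q x = 0" by simp
  qed
  then have eq: "\<And>y. length y = p \<Longrightarrow> g y = Q y"
    using poly_fun_zero[OF D U(3) U(2)] by force
  show ?thesis
  proof (intro exI[of _ P'] conjI impI allI)
    show "wf_prog p P'" unfolding wf_prog_def
      using len1 wf lP' nth rel_props by metis
    show "relu_free P'" unfolding relu_free_def
      by (metis in_set_conv_nth lP' nth rel_props)
    show "length x = p \<Longrightarrow> run P' x = Q x" for x using runP' eq by simp
    assume c: "cost OpRelu = cost OpMulC"
    have "map (\<lambda>i. cost (kind i)) P' = map (\<lambda>i. cost (kind i)) P1"
    proof (rule nth_equalityI)
      show "length (map (\<lambda>i. cost (kind i)) P') = length (map (\<lambda>i. cost (kind i)) P1)" using lP' by simp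
      fix k assume "k < length (map (\<lambda>i. cost (kind i)) P')"
      then have k: "k < length P1" using lP' by simp
      have "kind (P'!k) = (if kind (P1!k) = OpRelu then OpMulC else kind (P1!k))"
        using rel_props[OF nth[OF k]] by blast
      then show "map (\<lambda>i. cost (kind i)) P' ! k = map (\<lambda>i. cost (kind i)) P1 ! k"
        using k lP' c by (auto split: if_splits)
    qed
    then show "prog_cost cost P' = prog_cost cost P1" unfolding prog_cost_def by simp
  qed
qed

end
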